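(* Let $V=\mathbb{R}^{16}$, with coordinates indexed by $(a,b,x,y)\in\{0,1\}^4$, and let $G$ be the relabeling group of the $(2,2,2)$ Bell scenario acting on $V$ (defined in the context). Define the subspaces $V_{\mathrm{NO}_1}=\operatorname{span}\{\vec Q_{++++}\}$, $V_{\mathrm{NO}_2}=\operatorname{span}\{\vec Q_{+++-},\vec Q_{++-+}\}$, $V_{\mathrm{NO}_3}=\operatorname{span}\{\vec Q_{++--}\}$, $V_{\mathrm{marg}}=\operatorname{span}\{\vec Q_{-+++},\vec Q_{-+-+},\vec Q_{+-++},\vec Q_{+-+-}\}$, $V_{\mathrm{corr}}=\operatorname{span}\{\vec Q_{--++},\vec Q_{--+-},\vec Q_{---+},\vec Q_{----}\}$, $V_{\mathrm{SI}}=\operatorname{span}\{\vec Q_{+--+},\vec Q_{+---},\vec Q_{-++-},\vec Q_{-+--}\}$. Then $V=V_{\mathrm{NO}_1}\oplus V_{\mathrm{NO}_2}\oplus V_{\mathrm{NO}_3}\oplus V_{\mathrm{marg}}\oplus V_{\mathrm{corr}}\oplus V_{\mathrm{SI}}$, these six subspaces are mutually orthogonal, each is $G$-invariant and is an irreducible representation of $G$, and the six representations are pairwise nonequivalent. Consequently this is the unique decomposition of $V$ into $G$-irreducible subspaces (the finest $G$-invariant decomposition), and for every $g\in G$ and $\vec P\in V$ the component of $g\vec P$ in each of these subspaces is $g$ applied to the component of $\vec P$ in that subspace.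
   Context: For $i,j,k,l\in\{+1,-1\}$ (written $\pm$), $\vec Q_{ijkl}\in V$ is the vector with entries $Q_{ijkl}(ab|xy)=i^a j^b k^x l^y$. The relabeling group $G$ is the group of permutations of the index set $\{0,1\}^4$ (acting on $V$ by permuting coordinates, $(g\vec P)(g(a,b,x,y))=P(a,b,x,y)$) generated by: flipping Alice's outcome $a\mapsto 1-a$ only for indices with a given value of $x$ (for each $x\in\{0,1\}$); flipping Bob's outcome $b\mapsto 1-b$ only for indices with a given value of $y$; flipping Alice's setting $x\mapsto 1-x$; flipping Bob's setting $y\mapsto 1-y$; and exchanging the parties $(a,b,x,y)\mapsto(b,a,y,x)$. It is the wreath product $(\mathfrak S_2\wr\mathfrak S_2)\wr\mathfrak S_2$, of order 128. *)

theory Defs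
  imports "HOL-Analysis.Analysis"
begin

text \<open>Index set \<open>{0,1}^4\<close>: a coordinate \<open>(a,b,x,y)\<close> is encoded with \<open>False = 0\<close>, \<open>True = 1\<close>.\<close>
type_synonym idx = "bool \<times> bool \<times> bool \<times> bool"
type_synonym vec = "real ^ idx"

definition Q :: "real \<Rightarrow> real \<Rightarrow> real \<Rightarrow> real \<Rightarrow> vec" where
  "Q i j k l = (\<chi> t. case t of (a, b, x, y) \<Rightarrow> i ^ (of_bool a) * j ^ (of_bool b) * k ^ (of_bool x) * l ^ (of_bool y))"

definition flipA :: "bool \<Rightarrow> idx \<Rightarrow> idx" where
  "flipA x0 = (\<lambda>(a, b, x, y). (if x = x0 then \<not> a else a, b, x, y))"
definition flipB :: "bool \<Rightarrow> idx \<Rightarrow> idx" where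
  "flipB y0 = (\<lambda>(a, b, x, y). (a, if y = y0 then \<not> b else b, x, y))"
definition flipX :: "idx \<Rightarrow> idx" where
  "flipX = (\<lambda>(a, b, x, y). (a, b, \<not> x, y))"
definition flipY :: "idx \<Rightarrow> idx" where
  "flipY = (\<lambda>(a, b, x, y). (a, b, x, \<not> y))"
definition swapAB :: "idx \<Rightarrow> idx" where
  "swapAB = (\<lambda>(a, b, x, y). (b, a, y, x))"

definition generators :: "(idx \<Rightarrow> idx) set" where
  "generators = {flipA False, flipA True, flipB False, flipB True, flipX, flipY, swapAB}"

text \<open>The group generated (under composition) by the generators; since the index set is
  finite and the generators are permutations, closure under composition gives the group.\<close>
inductive_set relabel :: "(idx \<Rightarrow> idx) set" where
  relabel_id: "id \<in> relabel"
| relabel_step: "g \<in> relabel \<Longrightarrow> s \<in> generators \<Longrightarrow> s \<circ> g \<in> relabel"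

definition act :: "(idx \<Rightarrow> idx) \<Rightarrow> vec \<Rightarrow> vec" where
  "act g P = (\<chi> j. P $ (inv g j))"

datatype part = NO1 | NO2 | NO3 | Marg | Corr | SI

lemma UNIV_part: "(UNIV :: part set) = {NO1, NO2, NO3, Marg, Corr, SI}"
  using part.exhaust by auto

instance part :: finite
  by standard (simp add: UNIV_part)

definition Vsub :: "part \<Rightarrow> vec set" where
  "Vsub p = (case p of
      NO1 \<Rightarrow> span {Q 1 1 1 1}
    | NO2 \<Rightarrow> span {Q 1 1 1 (-1), Q 1 1 (-1) 1}
    | NO3 \<Rightarrow> span {Q 1 1 (-1) (-1)}
    | Marg \<Rightarrow> span {Q (-1) 1 1 1, Q (-1) 1 (-1) 1, Q 1 (-1) 1 1, Q 1 (-1) 1 (-1)}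
    | Corr \<Rightarrow> span {Q (-1) (-1) 1 1, Q (-1) (-1) 1 (-1), Q (-1) (-1) (-1) 1, Q (-1) (-1) (-1) (-1)}
    | SI \<Rightarrow> span {Q 1 (-1) (-1) 1, Q 1 (-1) (-1) (-1), Q (-1) 1 1 (-1), Q (-1) 1 (-1) (-1)})"

definition G_invariant :: "vec set \<Rightarrow> bool" where
  "G_invariant W \<longleftrightarrow> (\<forall>g\<in>relabel. \<forall>v\<in>W. act g v \<in> W)"

definition G_irreducible :: "vec set \<Rightarrow> bool" where
  "G_irreducible W \<longleftrightarrow> subspace W \<and> G_invariant W \<and> W \<noteq> {0} \<and>
     (\<forall>U. subspace U \<and> U \<subseteq> W \<and> G_invariant U \<longrightarrow> U = {0} \<or> U = W)"

definition G_equivalent :: "vec set \<Rightarrow> vec set \<Rightarrow> bool" where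
  "G_equivalent W U \<longleftrightarrow> (\<exists>T. linear T \<and> bij_betw T W U \<and>
     (\<forall>g\<in>relabel. \<forall>v\<in>W. T (act g v) = act g (T v)))"

definition direct_sum_decomp :: "vec set set \<Rightarrow> bool" where
  "direct_sum_decomp \<W> \<longleftrightarrow> finite \<W> \<and> (\<forall>W\<in>\<W>. subspace W) \<and>
     (\<forall>v. \<exists>!c. c \<in> extensional \<W> \<and> (\<forall>W\<in>\<W>. c W \<in> W) \<and> v = (\<Sum>W\<in>\<W>. c W))"

definition component :: "part \<Rightarrow> vec \<Rightarrow> vec" where
  "component p P = (THE c. (\<forall>q. c q \<in> Vsub q) \<and> P = (\<Sum>q\<in>UNIV. c q)) p"

end

theory Submission
  imports Defs
begin


definition sg :: "bool \<Rightarrow> real" where "sg b = (if b then -1 else 1)"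
definition qv :: "idx \<Rightarrow> vec" where
  "qv s = (case s of (i,j,k,l) \<Rightarrow> Q (sg i) (sg j) (sg k) (sg l))"

lemma qv_nth: "qv (i,j,k,l) $ (a,b,x,y) = sg (i\<and>a) * sg (j\<and>b) * sg (k\<and>x) * sg (l\<and>y)"
  by (simp add: qv_def Q_def sg_def)

lemma qv_sym: "qv s $ t = qv t $ s"
  by (cases s rule: prod_cases4; cases t rule: prod_cases4) (simp add: qv_nth conj_commute)

lemma sum_idx: "(\<Sum>t\<in>(UNIV::idx set). f t) = (\<Sum>a\<in>UNIV. \<Sum>b\<in>UNIV. \<Sum>x\<in>UNIV. \<Sum>y\<in>UNIV. f (a,b,x,y))"
  by (simp add: UNIV_Times_UNIV[symmetric] sum.cartesian_product del: UNIV_Times_UNIV)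

lemma qv_inner: "qv s \<bullet> qv r = (if s = r then 16 else 0)"
  apply (cases s rule: prod_cases4; cases r rule: prod_cases4)
  apply (simp add: inner_vec_def sum_idx qv_nth UNIV_bool)
  apply (simp add: sg_def)
  done




lemma inner_swap: "qv r \<bullet> qv t = (\<Sum>s\<in>UNIV. qv s $ r * qv s $ t)"
  unfolding inner_vec_def by (rule sum.cong) (simp_all add: qv_sym[of _ r] qv_sym[of _ t])

lemma expand: "v = (\<Sum>s\<in>UNIV. (v \<bullet> qv s / 16) *\<^sub>R qv s)"
proof (subst vec_eq_iff, intro allI)
  fix t
  have "(\<Sum>s\<in>UNIV. (v \<bullet> qv s / 16) *\<^sub>R qv s) $ t = (\<Sum>s\<in>UNIV. (\<Sum>r\<in>UNIV. v $ r * (qv s $ r * qv s $ t) / 16))"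
    unfolding sum_component inner_vec_def
    by (rule sum.cong) (simp_all add: sum_distrib_left mult_ac)
  also have "\<dots> = (\<Sum>r\<in>UNIV. v $ r * (qv r \<bullet> qv t) / 16)"
    unfolding inner_swap
    by (subst sum.swap) (rule sum.cong, simp_all add: sum_divide_distrib sum_distrib_left)
  also have "\<dots> = (\<Sum>r\<in>UNIV. if r = t then v $ t else 0)"
    by (rule sum.cong) (simp_all add: qv_inner)
  also have "\<dots> = v $ t" by simp
  finally show "v $ t = (\<Sum>s\<in>UNIV. (v \<bullet> qv s / 16) *\<^sub>R qv s) $ t" by simp
qed

lemma zero_iff: "(v = 0) \<longleftrightarrow> (\<forall>s. v \<bullet> qv s = 0)"
proof
  assume "\<forall>s. v \<bullet> qv s = 0"
  then have "\<And>s. v \<bullet> qv s = 0" by blast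
  then have "(\<Sum>s\<in>UNIV. (v \<bullet> qv s / 16) *\<^sub>R qv s) = 0" by simp
  then show "v = 0" using expand[of v] by simp
qed simp

lemma span_char: "span (qv ` A) = {v. \<forall>s. s \<notin> A \<longrightarrow> v \<bullet> qv s = 0}"
proof
  have sub: "subspace {v. \<forall>s. s \<notin> A \<longrightarrow> v \<bullet> qv s = 0}"
    unfolding subspace_def
  proof (intro conjI ballI allI)
    show "0 \<in> {v. \<forall>s. s \<notin> A \<longrightarrow> v \<bullet> qv s = 0}" by simp
  next
    fix x y assume "x \<in> {v. \<forall>s. s \<notin> A \<longrightarrow> v \<bullet> qv s = 0}" "y \<in> {v. \<forall>s. s \<notin> A \<longrightarrow> v \<bullet> qv s = 0}"
    then show "x + y \<in> {v. \<forall>s. s \<notin> A \<longrightarrow> v \<bullet> qv s = 0}" by (simp add: inner_add_left del: split_paired_All)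
  next
    fix c x assume "x \<in> {v. \<forall>s. s \<notin> A \<longrightarrow> v \<bullet> qv s = 0}"
    then show "c *\<^sub>R x \<in> {v. \<forall>s. s \<notin> A \<longrightarrow> v \<bullet> qv s = 0}" by (simp del: split_paired_All)
  qed
  have "qv ` A \<subseteq> {v. \<forall>s. s \<notin> A \<longrightarrow> v \<bullet> qv s = 0}"
  proof (rule image_subsetI)
    fix r assume "r \<in> A"
    have "\<forall>s. s \<notin> A \<longrightarrow> qv r \<bullet> qv s = 0"
    proof (intro allI impI)
      fix s assume "s \<notin> A"
      then have "r \<noteq> s" using \<open>r \<in> A\<close> by blast
      then show "qv r \<bullet> qv s = 0" by (simp only: qv_inner if_False)
    qed
    then show "qv r \<in> {v. \<forall>s. s \<notin> A \<longrightarrow> v \<bullet> qv s = 0}" by blast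
  qed
  then show "span (qv ` A) \<subseteq> {v. \<forall>s. s \<notin> A \<longrightarrow> v \<bullet> qv s = 0}"
    by (rule span_minimal[OF _ sub])
next
  show "{v. \<forall>s. s \<notin> A \<longrightarrow> v \<bullet> qv s = 0} \<subseteq> span (qv ` A)"
  proof
    fix v assume v: "v \<in> {v. \<forall>s. s \<notin> A \<longrightarrow> v \<bullet> qv s = 0}"
    have "v = (\<Sum>s\<in>UNIV. (v \<bullet> qv s / 16) *\<^sub>R qv s)" by (rule expand)
    also have "\<dots> \<in> span (qv ` A)"
    proof (rule span_sum)
      fix s
      show "(v \<bullet> qv s / 16) *\<^sub>R qv s \<in> span (qv ` A)"
      proof (cases "s \<in> A")
        case True then show ?thesis by (intro span_scale span_base) simp
      next
        case False then have "v \<bullet> qv s = 0" using v by blast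
        then show ?thesis by (simp add: span_zero)
      qed
    qed
    finally show "v \<in> span (qv ` A)" .
  qed
qed




definition pt :: "idx \<Rightarrow> part" where
  "pt s = (case s of (i,j,k,l) \<Rightarrow>
     if \<not> i \<and> \<not> j then (if \<not> k \<and> \<not> l then NO1 else if k \<and> l then NO3 else NO2)
     else if i \<and> j then Corr
     else if i then (if l then SI else Marg)
     else (if k then SI else Marg))"

lemma S_NO1: "{s. pt s = NO1} = {(False,False,False,False)}" by (auto simp: pt_def split: if_splits)
lemma S_NO2: "{s. pt s = NO2} = {(False,False,False,True),(False,False,True,False)}" by (auto simp: pt_def split: if_splits)
lemma S_NO3: "{s. pt s = NO3} = {(False,False,True,True)}" by (auto simp: pt_def split: if_splits)
lemma S_Marg: "{s. pt s = Marg} = {(True,False,False,False),(True,False,True,False),(False,True,False,False),(False,True,False,True)}" by (auto simp: pt_def split: if_splits)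
lemma S_Corr: "{s. pt s = Corr} = {(True,True,False,False),(True,True,False,True),(True,True,True,False),(True,True,True,True)}" by (auto simp: pt_def split: if_splits)
lemma S_SI: "{s. pt s = SI} = {(False,True,True,False),(False,True,True,True),(True,False,False,True),(True,False,True,True)}" by (auto simp: pt_def split: if_splits)

lemma Vsub_span: "Vsub p = span (qv ` {s. pt s = p})"
  by (cases p) (simp_all only: S_NO1 S_NO2 S_NO3 S_Marg S_Corr S_SI image_insert image_empty,
      simp_all add: Vsub_def qv_def sg_def)

lemma Vsub_char: "Vsub p = {v. \<forall>s. pt s \<noteq> p \<longrightarrow> v \<bullet> qv s = 0}"
  unfolding Vsub_span span_char by simp

lemma inv_inv: "f \<circ> f = id \<Longrightarrow> inv f = f"
  by (metis inv_unique_comp)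

lemma invol: "flipA x0 \<circ> flipA x0 = id" "flipB y0 \<circ> flipB y0 = id" "flipX \<circ> flipX = id"
  "flipY \<circ> flipY = id" "swapAB \<circ> swapAB = id"
  by (auto simp: fun_eq_iff flipA_def flipB_def flipX_def flipY_def swapAB_def)

lemma inv_gen: "inv (flipA x0) = flipA x0" "inv (flipB y0) = flipB y0" "inv flipX = flipX"
  "inv flipY = flipY" "inv swapAB = swapAB"
  by (simp_all add: inv_inv invol)

lemma gen_bij: "h \<in> generators \<Longrightarrow> bij h"
  unfolding generators_def using invol by (auto intro: o_bij)

lemma relabel_bij: "g \<in> relabel \<Longrightarrow> bij g"
  proof (induction rule: relabel.induct)
  case relabel_id show ?case by (rule bij_id)
next
  case (relabel_step g s) then show ?case using bij_comp gen_bij by blast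
qed

lemma act_nth: "act g P $ j = P $ inv g j" by (simp add: act_def)

lemma act_linear: "linear (act g)"
  by (rule linearI) (simp_all add: vec_eq_iff act_nth)

lemma act_comp: "bij g \<Longrightarrow> bij h \<Longrightarrow> act (h \<circ> g) P = act h (act g P)"
  by (simp add: vec_eq_iff act_nth o_inv_distrib)

lemma act_fAT: "act (flipA True) (qv (i,j,k,l)) = qv (i,j,i\<noteq>k,l)"
  unfolding vec_eq_iff
proof
  fix t show "act (flipA True) (qv (i,j,k,l)) $ t = qv (i,j,i\<noteq>k,l) $ t"
    by (cases t rule: prod_cases4) (cases i; cases k; simp only: act_nth inv_gen; simp add: flipA_def qv_nth sg_def)
qed

lemma act_fAF: "act (flipA False) (qv (i,j,k,l)) = sg i *\<^sub>R qv (i,j,i\<noteq>k,l)"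
  unfolding vec_eq_iff
proof
  fix t show "act (flipA False) (qv (i,j,k,l)) $ t = (sg i *\<^sub>R qv (i,j,i\<noteq>k,l)) $ t"
    by (cases t rule: prod_cases4) (cases i; cases k; simp only: act_nth inv_gen; simp add: flipA_def qv_nth sg_def)
qed

lemma act_fBT: "act (flipB True) (qv (i,j,k,l)) = qv (i,j,k,j\<noteq>l)"
  unfolding vec_eq_iff
proof
  fix t show "act (flipB True) (qv (i,j,k,l)) $ t = qv (i,j,k,j\<noteq>l) $ t"
    by (cases t rule: prod_cases4) (cases j; cases l; simp only: act_nth inv_gen; simp add: flipB_def qv_nth sg_def)
qed

lemma act_fBF: "act (flipB False) (qv (i,j,k,l)) = sg j *\<^sub>R qv (i,j,k,j\<noteq>l)"
  unfolding vec_eq_iff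
proof
  fix t show "act (flipB False) (qv (i,j,k,l)) $ t = (sg j *\<^sub>R qv (i,j,k,j\<noteq>l)) $ t"
    by (cases t rule: prod_cases4) (cases j; cases l; simp only: act_nth inv_gen; simp add: flipB_def qv_nth sg_def)
qed

lemma act_fX: "act flipX (qv (i,j,k,l)) = sg k *\<^sub>R qv (i,j,k,l)"
  unfolding vec_eq_iff
proof
  fix t show "act flipX (qv (i,j,k,l)) $ t = (sg k *\<^sub>R qv (i,j,k,l)) $ t"
    by (cases t rule: prod_cases4) (cases k; simp only: act_nth inv_gen; simp add: flipX_def qv_nth sg_def)
qed

lemma act_fY: "act flipY (qv (i,j,k,l)) = sg l *\<^sub>R qv (i,j,k,l)"
  unfolding vec_eq_iff
proof
  fix t show "act flipY (qv (i,j,k,l)) $ t = (sg l *\<^sub>R qv (i,j,k,l)) $ t"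
    by (cases t rule: prod_cases4) (cases l; simp only: act_nth inv_gen; simp add: flipY_def qv_nth sg_def)
qed

lemma act_sw: "act swapAB (qv (i,j,k,l)) = qv (j,i,l,k)"
  unfolding vec_eq_iff
proof
  fix t show "act swapAB (qv (i,j,k,l)) $ t = qv (j,i,l,k) $ t"
    by (cases t rule: prod_cases4) (simp only: act_nth inv_gen; simp add: swapAB_def qv_nth mult_ac)
qed




lemma act_add: "act g (x + y) = act g x + act g y" by (simp add: vec_eq_iff act_nth)
lemma act_scale: "act g (c *\<^sub>R x) = c *\<^sub>R act g x" by (simp add: vec_eq_iff act_nth)
lemma act_zero: "act g 0 = 0" by (simp add: vec_eq_iff act_nth)
lemma act_diff: "act g (x - y) = act g x - act g y" by (simp add: vec_eq_iff act_nth)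
lemma act_sum: "act g (\<Sum>x\<in>A. f x) = (\<Sum>x\<in>A. act g (f x))"
  by (simp add: vec_eq_iff act_nth)

lemma act_id: "act id v = v" by (simp add: vec_eq_iff act_nth)

lemma ext_qv: "(\<And>s. x \<bullet> qv s = y \<bullet> qv s) \<Longrightarrow> x = y"
  using zero_iff[of "x - y"] by (simp add: inner_diff_left)

lemma comb_inner: "(\<Sum>r\<in>UNIV. c r *\<^sub>R qv r) \<bullet> qv s = 16 * c s"
proof -
  have "(\<Sum>r\<in>UNIV. c r *\<^sub>R qv r) \<bullet> qv s = (\<Sum>r\<in>UNIV. if r = s then 16 * c s else 0)"
    unfolding inner_sum_left by (rule sum.cong) (simp_all add: qv_inner)
  then show ?thesis by simp
qed

lemma qv_ne0: "qv s \<noteq> 0"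
proof
  assume "qv s = 0" then have "qv s \<bullet> qv s = 0" by simp
  then show False by (simp add: qv_inner)
qed

lemma pt_m1: "pt (i,j,i\<noteq>k,l) = pt (i,j,k,l)" by (cases i; cases j; cases k; cases l) (simp_all add: pt_def)
lemma pt_m2: "pt (i,j,k,j\<noteq>l) = pt (i,j,k,l)" by (cases i; cases j; cases k; cases l) (simp_all add: pt_def)
lemma pt_m3: "pt (j,i,l,k) = pt (i,j,k,l)" by (cases i; cases j; cases k; cases l) (simp_all add: pt_def)

lemma gen_qv: assumes "h \<in> generators"
  shows "\<exists>c s'. act h (qv s) = c *\<^sub>R qv s' \<and> pt s' = pt s"
proof -
  obtain i j k l where s: "s = (i,j,k,l)" by (cases s rule: prod_cases4)
  from assms show ?thesis unfolding generators_def s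
    using act_fAT[of i j k l] act_fAF[of i j k l] act_fBT[of i j k l] act_fBF[of i j k l]
      act_fX[of i j k l] act_fY[of i j k l] act_sw[of i j k l] pt_m1 pt_m2 pt_m3
    by (elim insertE emptyE) (metis scaleR_one)+
qed

lemma gen_inv: assumes "h \<in> generators" "v \<in> Vsub p" shows "act h v \<in> Vsub p"
proof -
  have "act h ` span (qv ` {s. pt s = p}) = span (act h ` qv ` {s. pt s = p})"
    by (rule span_linear_image[symmetric, OF act_linear])
  also have "\<dots> \<subseteq> span (qv ` {s. pt s = p})"
  proof (rule span_minimal[OF _ subspace_span], rule image_subsetI)
    fix x assume "x \<in> qv ` {s. pt s = p}"
    then obtain s where s: "x = qv s" "pt s = p" by blast
    obtain c s' where "act h (qv s) = c *\<^sub>R qv s'" "pt s' = pt s" using gen_qv[OF assms(1)] by blast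
    moreover have "qv s' \<in> qv ` {s. pt s = p}" using s \<open>pt s' = pt s\<close> by auto
    ultimately show "act h x \<in> span (qv ` {s. pt s = p})"
      using s by (metis span_scale span_base)
  qed
  finally show ?thesis using assms(2) unfolding Vsub_span by blast
qed

lemma gen_relabel: "h \<in> generators \<Longrightarrow> h \<in> relabel"
  using relabel_step[OF relabel_id] by (metis comp_id)

lemma G_inv: "G_invariant (Vsub p)"
  unfolding G_invariant_def
proof (intro ballI)
  fix g v assume "g \<in> relabel" "v \<in> Vsub p"
  then show "act g v \<in> Vsub p"
  proof (induction g rule: relabel.induct)
    case relabel_id then show ?case by (metis act_id id_def)
  next
    case (relabel_step g s)
    then show ?case by (metis act_comp relabel_bij gen_bij gen_inv)
  qed
qed




lemma eig: assumes "\<And>r. act g (qv r) = f r *\<^sub>R qv r"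
  shows "act g w \<bullet> qv s = f s * (w \<bullet> qv s)"
proof -
  have "act g w = act g (\<Sum>r\<in>UNIV. (w \<bullet> qv r / 16) *\<^sub>R qv r)"
    by (rule arg_cong[where f="act g"], rule expand)
  also have "\<dots> = (\<Sum>r\<in>UNIV. ((w \<bullet> qv r / 16) * f r) *\<^sub>R qv r)"
    by (simp add: act_sum act_scale assms)
  finally show ?thesis by (simp add: comb_inner)
qed

definition "dA = flipA False \<circ> flipA True"
definition "dB = flipB False \<circ> flipB True"

lemma dA_rel: "dA \<in> relabel"
  using relabel_step[OF relabel_step[OF relabel_id], of "flipA True" "flipA False"]
  unfolding dA_def generators_def by simp
lemma dB_rel: "dB \<in> relabel"
  using relabel_step[OF relabel_step[OF relabel_id], of "flipB True" "flipB False"]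
  unfolding dB_def generators_def by simp
lemma X_rel: "flipX \<in> relabel" by (rule gen_relabel) (simp add: generators_def)
lemma Y_rel: "flipY \<in> relabel" by (rule gen_relabel) (simp add: generators_def)

lemma dA_qv: "act dA (qv r) = sg (case r of (i,j,k,l) \<Rightarrow> i) *\<^sub>R qv r"
proof -
  obtain i j k l where r: "r = (i,j,k,l)" by (cases r rule: prod_cases4)
  have "act dA (qv r) = act (flipA False) (act (flipA True) (qv r))"
    unfolding dA_def by (rule act_comp) (simp_all add: gen_bij generators_def)
  then show ?thesis unfolding r by (cases i; cases k) (simp_all add: act_fAT act_fAF)
qed

lemma dB_qv: "act dB (qv r) = sg (case r of (i,j,k,l) \<Rightarrow> j) *\<^sub>R qv r"
proof -
  obtain i j k l where r: "r = (i,j,k,l)" by (cases r rule: prod_cases4)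
  have "act dB (qv r) = act (flipB False) (act (flipB True) (qv r))"
    unfolding dB_def by (rule act_comp) (simp_all add: gen_bij generators_def)
  then show ?thesis unfolding r by (cases j; cases l) (simp_all add: act_fBT act_fBF)
qed

lemma X_qv: "act flipX (qv r) = sg (case r of (i,j,k,l) \<Rightarrow> k) *\<^sub>R qv r"
  by (cases r rule: prod_cases4) (simp add: act_fX)
lemma Y_qv: "act flipY (qv r) = sg (case r of (i,j,k,l) \<Rightarrow> l) *\<^sub>R qv r"
  by (cases r rule: prod_cases4) (simp add: act_fY)

lemma sg_prod: "sg a * sg b = (if a = b then 1 else -1)"
  by (cases a; cases b) (simp_all add: sg_def)

lemma filt:
  assumes sub: "subspace U" and inv: "G_invariant U" and u: "u \<in> U" and g: "g \<in> relabel"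
    and d: "\<And>r. act g (qv r) = sg (c r) *\<^sub>R qv r"
  shows "\<exists>u'\<in>U. \<forall>s. u' \<bullet> qv s = (if c s = b then u \<bullet> qv s else 0)"
proof (intro bexI allI)
  have "act g u \<in> U" using inv g u unfolding G_invariant_def by blast
  then show "(1/2) *\<^sub>R (u + sg b *\<^sub>R act g u) \<in> U"
    using sub u by (intro subspace_scale subspace_add) auto
  fix s
  have e: "act g u \<bullet> qv s = sg (c s) * (u \<bullet> qv s)" by (rule eig[OF d])
  show "((1/2) *\<^sub>R (u + sg b *\<^sub>R act g u)) \<bullet> qv s = (if c s = b then u \<bullet> qv s else 0)"
    by (simp add: inner_add_left e mult.assoc[symmetric] sg_prod)
qed

lemma key:
  assumes sub: "subspace U" and inv: "G_invariant U" and u: "u \<in> U" and nz: "u \<bullet> qv s0 \<noteq> 0"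
  shows "qv s0 \<in> U"
proof -
  obtain a0 b0 c0 d0 where s0: "s0 = (a0,b0,c0,d0)" by (cases s0 rule: prod_cases4)
  obtain u1 where u1: "u1 \<in> U" "\<forall>s. u1 \<bullet> qv s = (if (case s of (i,j,k,l) \<Rightarrow> i) = a0 then u \<bullet> qv s else 0)"
    using filt[OF sub inv u dA_rel dA_qv] by blast
  obtain u2 where u2: "u2 \<in> U" "\<forall>s. u2 \<bullet> qv s = (if (case s of (i,j,k,l) \<Rightarrow> j) = b0 then u1 \<bullet> qv s else 0)"
    using filt[OF sub inv u1(1) dB_rel dB_qv] by blast
  obtain u3 where u3: "u3 \<in> U" "\<forall>s. u3 \<bullet> qv s = (if (case s of (i,j,k,l) \<Rightarrow> k) = c0 then u2 \<bullet> qv s else 0)"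
    using filt[OF sub inv u2(1) X_rel X_qv] by blast
  obtain u4 where u4: "u4 \<in> U" "\<forall>s. u4 \<bullet> qv s = (if (case s of (i,j,k,l) \<Rightarrow> l) = d0 then u3 \<bullet> qv s else 0)"
    using filt[OF sub inv u3(1) Y_rel Y_qv] by blast
  have "u4 = (u \<bullet> qv s0 / 16) *\<^sub>R qv s0"
  proof (rule ext_qv)
    fix s :: idx
    obtain a b c d where s: "s = (a,b,c,d)" by (cases s rule: prod_cases4)
    note f = u1(2)[rule_format, of s] u2(2)[rule_format, of s] u3(2)[rule_format, of s] u4(2)[rule_format, of s]
    have "u4 \<bullet> qv s = (if d = d0 then (if c = c0 then (if b = b0 then (if a = a0 then u \<bullet> qv s else 0) else 0) else 0) else 0)"
      unfolding s by (simp only: f[unfolded s] prod.case)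
    also have "\<dots> = (if s = s0 then u \<bullet> qv s0 else 0)" unfolding s s0 by auto
    finally have "u4 \<bullet> qv s = (if s = s0 then u \<bullet> qv s0 else 0)" .
    then show "u4 \<bullet> qv s = ((u \<bullet> qv s0 / 16) *\<^sub>R qv s0) \<bullet> qv s"
      by (simp add: qv_inner eq_commute[of s0 s])
  qed
  then have "qv s0 = (16 / (u \<bullet> qv s0)) *\<^sub>R u4" using nz by simp
  then show ?thesis using sub u4(1) by (metis subspace_scale)
qed

lemma moves:
  assumes inv: "G_invariant U" and sub: "subspace U" and q: "qv (i,j,k,l) \<in> U"
  shows "qv (i,j,i\<noteq>k,l) \<in> U" "qv (i,j,k,j\<noteq>l) \<in> U" "qv (j,i,l,k) \<in> U"
proof -
  have r: "flipA True \<in> relabel" "flipB True \<in> relabel" "swapAB \<in> relabel"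
    by (rule gen_relabel, simp add: generators_def)+
  show "qv (i,j,i\<noteq>k,l) \<in> U" using inv r q unfolding G_invariant_def by (metis act_fAT)
  show "qv (i,j,k,j\<noteq>l) \<in> U" using inv r q unfolding G_invariant_def by (metis act_fBT)
  show "qv (j,i,l,k) \<in> U" using inv r q unfolding G_invariant_def by (metis act_sw)
qed

lemma conn:
  assumes m1: "\<And>i j k l. R (i,j,k,l) \<Longrightarrow> R (i,j,i\<noteq>k,l)"
    and m2: "\<And>i j k l. R (i,j,k,l) \<Longrightarrow> R (i,j,k,j\<noteq>l)"
    and m3: "\<And>i j k l. R (i,j,k,l) \<Longrightarrow> R (j,i,l,k)"
    and r0: "R s0" and p: "pt s = pt s0"
  shows "R s"
proof -
  obtain a b c d where s0: "s0 = (a,b,c,d)" by (cases s0 rule: prod_cases4)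
  obtain a' b' c' d' where s: "s = (a',b',c',d')" by (cases s rule: prod_cases4)
  have f0: "R (a,b,c,d)" using r0 s0 by simp
  have f1: "R (a,b,a\<noteq>c,d)" "R (a,b,c,b\<noteq>d)" "R (b,a,d,c)"
    using m1[OF f0] m2[OF f0] m3[OF f0] .
  have f2: "R (a,b,a\<noteq>c,b\<noteq>d)" "R (b,a,b\<noteq>d,c)" "R (b,a,d,a\<noteq>c)"
    using m2[OF f1(1)] m3[OF f1(2)] m3[OF f1(1)] .
  show ?thesis using p f0 f1 f2 unfolding s s0
    by (cases a; cases b; cases c; cases d; cases a'; cases b'; cases c'; cases d'; simp add: pt_def)
qed

lemma span_in:
  assumes sub: "subspace U" and inv: "G_invariant U" and u: "u \<in> U" and nz: "u \<bullet> qv s0 \<noteq> 0"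
  shows "Vsub (pt s0) \<subseteq> U"
proof -
  have q0: "qv s0 \<in> U" by (rule key[OF sub inv u nz])
  have "qv s \<in> U" if "pt s = pt s0" for s
    using conn[where R="\<lambda>s. qv s \<in> U", OF moves(1)[OF inv sub] moves(2)[OF inv sub] moves(3)[OF inv sub] q0 that] .
  then show ?thesis unfolding Vsub_span by (intro span_minimal[OF _ sub]) auto
qed




lemma ex_rep: "\<exists>s. pt s = p"
proof (cases p)
  case NO1 then show ?thesis by (intro exI[of _ "(False,False,False,False)"]) (simp add: pt_def)
next
  case NO2 then show ?thesis by (intro exI[of _ "(False,False,False,True)"]) (simp add: pt_def)
next
  case NO3 then show ?thesis by (intro exI[of _ "(False,False,True,True)"]) (simp add: pt_def)
next
  case Marg then show ?thesis by (intro exI[of _ "(True,False,False,False)"]) (simp add: pt_def)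
next
  case Corr then show ?thesis by (intro exI[of _ "(True,True,False,False)"]) (simp add: pt_def)
next
  case SI then show ?thesis by (intro exI[of _ "(False,True,True,False)"]) (simp add: pt_def)
qed

lemma Vsub_subspace: "subspace (Vsub p)" unfolding Vsub_span by simp

lemma qv_in: "pt s = p \<Longrightarrow> qv s \<in> Vsub p"
  unfolding Vsub_span by (intro span_base) auto

lemma Vsub_nz: "Vsub p \<noteq> {0}"
  using ex_rep[of p] qv_in qv_ne0 by blast

lemma in_Vsub: "v \<in> Vsub p \<Longrightarrow> pt s \<noteq> p \<Longrightarrow> v \<bullet> qv s = 0"
  unfolding Vsub_char by blast

lemma irred: "G_irreducible (Vsub p)"
  unfolding G_irreducible_def
proof (intro conjI allI impI Vsub_subspace G_inv Vsub_nz)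
  fix U assume U: "subspace U \<and> U \<subseteq> Vsub p \<and> G_invariant U"
  show "U = {0} \<or> U = Vsub p"
  proof (cases "U = {0}")
    case False
    then obtain u where u: "u \<in> U" "u \<noteq> 0" using U subspace_0 by blast
    then obtain s where s: "u \<bullet> qv s \<noteq> 0" using zero_iff by blast
    have "pt s = p" using in_Vsub[of u p s] u U s by blast
    then have "Vsub p \<subseteq> U" using span_in[of U u s] U u s by blast
    then show ?thesis using U by blast
  qed simp
qed

lemma irr_eq: assumes "G_irreducible W" shows "\<exists>p. W = Vsub p"
proof -
  have W: "subspace W" "G_invariant W" "W \<noteq> {0}"
    and m: "\<And>U. subspace U \<and> U \<subseteq> W \<and> G_invariant U \<Longrightarrow> U = {0} \<or> U = W"
    using assms unfolding G_irreducible_def by blast+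
  obtain u where u: "u \<in> W" "u \<noteq> 0" using W subspace_0 by blast
  then obtain s where s: "u \<bullet> qv s \<noteq> 0" using zero_iff by blast
  have "Vsub (pt s) \<subseteq> W" using span_in[OF W(1) W(2) u(1) s] .
  then have "Vsub (pt s) = {0} \<or> Vsub (pt s) = W" using m Vsub_subspace G_inv by blast
  then show ?thesis using Vsub_nz by blast
qed

definition proj :: "part \<Rightarrow> vec \<Rightarrow> vec" where
  "proj p v = (\<Sum>s\<in>UNIV. (if pt s = p then v \<bullet> qv s / 16 else 0) *\<^sub>R qv s)"

lemma proj_inner: "proj p v \<bullet> qv s = (if pt s = p then v \<bullet> qv s else 0)"
  unfolding proj_def comb_inner by simp

lemma proj_in: "proj p v \<in> Vsub p"
  unfolding Vsub_char by (simp add: proj_inner del: split_paired_All)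


lemma proj_sum: "(\<Sum>p\<in>UNIV. proj p v) = v"
proof (rule ext_qv)
  fix s
  show "(\<Sum>p\<in>UNIV. proj p v) \<bullet> qv s = v \<bullet> qv s"
    unfolding inner_sum_left proj_inner by simp
qed

lemma decomp_unique:
  assumes c: "\<forall>q. c q \<in> Vsub q" and P: "P = (\<Sum>q\<in>UNIV. c q)"
  shows "c p = proj p P"
proof (rule ext_qv)
  fix s
  show "c p \<bullet> qv s = proj p P \<bullet> qv s"
  proof (cases "pt s = p")
    case True
    have "P \<bullet> qv s = (\<Sum>q\<in>UNIV. c q \<bullet> qv s)" unfolding P inner_sum_left ..
    also have "\<dots> = (\<Sum>q\<in>UNIV. if q = p then c p \<bullet> qv s else 0)"
    proof (rule sum.cong)
      fix x assume "x \<in> (UNIV :: part set)"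
      show "c x \<bullet> qv s = (if x = p then c p \<bullet> qv s else 0)"
      proof (cases "x = p")
        case False then show ?thesis using in_Vsub[of "c x" x s] c True by simp
      qed simp
    qed simp
    also have "\<dots> = c p \<bullet> qv s" by simp
    finally show ?thesis using True by (simp add: proj_inner)
  next
    case False
    then show ?thesis using c in_Vsub[of "c p" p s] by (simp add: proj_inner)
  qed
qed

lemma ex1_decomp: "\<exists>!c. (\<forall>p. c p \<in> Vsub p) \<and> P = (\<Sum>p\<in>UNIV. c p)"
proof (rule ex1I[of _ "\<lambda>p. proj p P"])
  show "(\<forall>p. proj p P \<in> Vsub p) \<and> P = (\<Sum>p\<in>UNIV. proj p P)"
    using proj_in proj_sum by simp
next
  fix c assume "(\<forall>p. c p \<in> Vsub p) \<and> P = (\<Sum>p\<in>UNIV. c p)"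
  then show "c = (\<lambda>p. proj p P)" using decomp_unique by blast
qed

lemma component_eq: "component p P = proj p P"
proof -
  have "(THE c. (\<forall>q. c q \<in> Vsub q) \<and> P = (\<Sum>q\<in>UNIV. c q)) = (\<lambda>q. proj q P)"
    by (rule the1_equality[OF ex1_decomp]) (simp add: proj_in proj_sum)
  then show ?thesis unfolding component_def by simp
qed

lemma orth: assumes "p \<noteq> q" "u \<in> Vsub p" "w \<in> Vsub q" shows "orthogonal u w"
proof -
  have "u \<bullet> w = u \<bullet> (\<Sum>s\<in>UNIV. (w \<bullet> qv s / 16) *\<^sub>R qv s)"
    by (rule arg_cong[where f="inner u"], rule expand)
  also have "\<dots> = (\<Sum>s\<in>UNIV. (w \<bullet> qv s / 16) * (u \<bullet> qv s))"
    by (simp add: inner_sum_right)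
  also have "\<dots> = 0"
  proof (rule sum.neutral, intro ballI)
    fix s
    show "(w \<bullet> qv s / 16) * (u \<bullet> qv s) = 0"
      using in_Vsub[OF assms(2), of s] in_Vsub[OF assms(3), of s] assms(1) by (cases "pt s = p") auto
  qed
  finally show ?thesis unfolding orthogonal_def .
qed

lemma noneq: assumes "p \<noteq> q" shows "\<not> G_equivalent (Vsub p) (Vsub q)"
proof
  assume "G_equivalent (Vsub p) (Vsub q)"
  then obtain T where T: "linear T" "bij_betw T (Vsub p) (Vsub q)"
    and com: "\<And>g v. g \<in> relabel \<Longrightarrow> v \<in> Vsub p \<Longrightarrow> T (act g v) = act g (T v)"
    unfolding G_equivalent_def by blast
  obtain s0 where s0: "pt s0 = p" using ex_rep by blast
  have q0: "qv s0 \<in> Vsub p" using qv_in[OF s0] .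
  define w where "w = T (qv s0)"
  have wq: "w \<in> Vsub q" using T(2) q0 unfolding w_def bij_betw_def by blast
  have "w \<noteq> 0"
  proof
    assume "w = 0"
    have "T 0 = 0" using T(1) by (rule linear_0)
    moreover have "0 \<in> Vsub p" using Vsub_subspace subspace_0 by blast
    ultimately have "qv s0 = 0" using T(2) q0 \<open>w = 0\<close> unfolding w_def bij_betw_def inj_on_def by metis
    then show False using qv_ne0 by blast
  qed
  have ev: "act g w = f s0 *\<^sub>R w" if g: "g \<in> relabel" and d: "\<And>r. act g (qv r) = f r *\<^sub>R qv r" for g f
  proof -
    have "act g w = T (act g (qv s0))" unfolding w_def using com[OF g q0] by simp
    also have "\<dots> = T (f s0 *\<^sub>R qv s0)" by (simp add: d)
    also have "\<dots> = f s0 *\<^sub>R w" unfolding w_def using T(1) by (rule linear_scale)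
    finally show ?thesis .
  qed
  have cmp: "w \<bullet> qv s = 0" if "c s \<noteq> c s0" and g: "g \<in> relabel" and d: "\<And>r. act g (qv r) = sg (c r) *\<^sub>R qv r" for g c s
  proof -
    have "act g w \<bullet> qv s = sg (c s) * (w \<bullet> qv s)" by (rule eig[OF d])
    moreover have "act g w \<bullet> qv s = sg (c s0) * (w \<bullet> qv s)" using ev[OF g d] by simp
    ultimately have "sg (c s) * (w \<bullet> qv s) = sg (c s0) * (w \<bullet> qv s)" by linarith
    moreover have "sg (c s) \<noteq> sg (c s0)" using that(1) by (cases "c s"; cases "c s0") (simp_all add: sg_def)
    ultimately show ?thesis by simp
  qed
  have "w \<bullet> qv s = 0" for s
  proof (cases "s = s0")
    case True then show ?thesis using in_Vsub[OF wq, of s] s0 assms by simp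
  next
    case False
    obtain a b c d where s: "s = (a,b,c,d)" by (cases s rule: prod_cases4)
    obtain a0 b0 c0 d0 where ss0: "s0 = (a0,b0,c0,d0)" by (cases s0 rule: prod_cases4)
    from False consider "a \<noteq> a0" | "b \<noteq> b0" | "c \<noteq> c0" | "d \<noteq> d0" unfolding s ss0 by auto
    then show ?thesis
    proof cases
      case 1 then show ?thesis using cmp[OF _ dA_rel dA_qv, of s] unfolding s ss0 by simp
    next
      case 2 then show ?thesis using cmp[OF _ dB_rel dB_qv, of s] unfolding s ss0 by simp
    next
      case 3 then show ?thesis using cmp[OF _ X_rel X_qv, of s] unfolding s ss0 by simp
    next
      case 4 then show ?thesis using cmp[OF _ Y_rel Y_qv, of s] unfolding s ss0 by simp
    qed
  qed
  then have "w = 0" using zero_iff by blast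
  then show False using \<open>w \<noteq> 0\<close> by blast
qed

lemma decomp_range:
  assumes D: "direct_sum_decomp \<W>" and I: "\<forall>W\<in>\<W>. G_irreducible W"
  shows "\<W> = range Vsub"
proof
  show "\<W> \<subseteq> range Vsub" using I irr_eq by blast
next
  show "range Vsub \<subseteq> \<W>"
  proof (rule ccontr)
    assume "\<not> range Vsub \<subseteq> \<W>"
    then obtain p where np: "Vsub p \<notin> \<W>" by blast
    obtain s where s: "pt s = p" using ex_rep by blast
    obtain c where c: "\<forall>W\<in>\<W>. c W \<in> W" "qv s = (\<Sum>W\<in>\<W>. c W)"
      using D unfolding direct_sum_decomp_def by blast
    have "qv s \<bullet> qv s = (\<Sum>W\<in>\<W>. c W \<bullet> qv s)" using c(2) inner_sum_left by metis
    also have "\<dots> = 0"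
    proof (rule sum.neutral, intro ballI)
      fix W assume W: "W \<in> \<W>"
      then obtain q where q: "W = Vsub q" using I irr_eq by blast
      then have "q \<noteq> p" using np W by blast
      then show "c W \<bullet> qv s = 0" using in_Vsub[of "c W" q s] c(1) W q s by blast
    qed
    finally show False by (simp add: qv_inner)
  qed
qed

lemma comp_act: assumes g: "g \<in> relabel" shows "component p (act g P) = act g (component p P)"
proof -
  have "(\<lambda>q. act g (proj q P)) p = proj p (act g P)"
  proof (rule decomp_unique)
    show "\<forall>q. act g (proj q P) \<in> Vsub q" using G_inv g proj_in unfolding G_invariant_def by blast
    show "act g P = (\<Sum>q\<in>UNIV. act g (proj q P))" by (simp add: act_sum[symmetric] proj_sum)
  qed
  then show ?thesis by (simp add: component_eq)
qed

theorem mainTheorem2: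
  shows "(\<forall>P::vec. \<exists>!c. (\<forall>p. c p \<in> Vsub p) \<and> P = (\<Sum>p\<in>UNIV. c p))
    \<and> (\<forall>p q. p \<noteq> q \<longrightarrow> (\<forall>u\<in>Vsub p. \<forall>w\<in>Vsub q. orthogonal u w))
    \<and> (\<forall>p. G_invariant (Vsub p) \<and> G_irreducible (Vsub p))
    \<and> (\<forall>p q. p \<noteq> q \<longrightarrow> \<not> G_equivalent (Vsub p) (Vsub q))
    \<and> (\<forall>\<W>. direct_sum_decomp \<W> \<and> (\<forall>W\<in>\<W>. G_irreducible W) \<longrightarrow> \<W> = range Vsub)
    \<and> (\<forall>g\<in>relabel. \<forall>P p. component p (act g P) = act g (component p P))"
  using ex1_decomp orth G_inv irred noneq decomp_range comp_act by blast


end
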